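(* For all $m,n\in\mathbb{N}$ and every $\boldsymbol{\gamma}\in[0,1)^m$, $\Omega^{\boldsymbol{\gamma}}(m,n)\subset\mathbf{Sing}^{\boldsymbol{\gamma}}_{m,n}(1)$.
   Context: $[0,1)^{m\times n}$ is the set of real $m\times n$ matrices with entries in $[0,1)$. For $\boldsymbol{x}\in\mathbb{R}^n$, $\|\boldsymbol{x}\|=\max_i|x_i|$; for $\boldsymbol{y}\in\mathbb{R}^m$, $\langle\boldsymbol{y}\rangle=\min_{\boldsymbol{p}\in\mathbb{Z}^m}\|\boldsymbol{y}-\boldsymbol{p}\|$. For $\psi:\mathbb{N}\to[0,\infty)$, $W_{m,n}(\psi)$ is the set of pairs $(A,\boldsymbol{\gamma})$ such that $\langle A\boldsymbol{q}-\boldsymbol{\gamma}\rangle<\psi(\|\boldsymbol{q}\|)$ for infinitely many $\boldsymbol{q}\in\mathbb{Z}^n$. "Decreasing" means non-increasing. $\mathcal{D}$ is the set of decreasing $\psi:\mathbb{N}\to[0,\infty)$ with $\sum_{q\ge1}q^{n-1}\psi(q)^m=\infty$; $\Omega(m,n)=\bigcap_{\psi\in\mathcal{D}}W_{m,n}(\psi)$ and $\Omega^{\boldsymbol{\gamma}}(m,n)=\{A:(A,\boldsymbol{\gamma})\in\Omega(m,n)\}$. For a decreasing $\psi:\mathbb{N}\to[0,\infty)$, $A\in[0,1)^{m\times n}$ belongs to $D^{\boldsymbol{\gamma}}_{m,n}(\psi)$ if for all sufficiently large $T$ there exists $\boldsymbol{q}\in\mathbb{Z}^n$ with $\langle A\boldsymbol{q}-\boldsymbol{\gamma}\rangle^m<\psi(T)$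 and $1\le\|\boldsymbol{q}\|^n\le T$. With $\psi_1(T)=T^{-1}$, $\mathbf{Sing}^{\boldsymbol{\gamma}}_{m,n}(1)=\bigcap_{\epsilon>0}D^{\boldsymbol{\gamma}}_{m,n}(\epsilon\psi_1)$. *)

theory Defs
  imports "HOL-Analysis.Analysis"
begin

text \<open>Dimensions m, n are encoded by finite index types 'm, 'n (so m, n >= 1).
  Matrices A in R^{m x n} are elements of real^'n^'m; integer vectors q are int^'n.\<close>

definition unit_cube_vec :: "(real^'m) set" where
  "unit_cube_vec = {g. \<forall>i. 0 \<le> g$i \<and> g$i < 1}"

definition unit_cube_mat :: "(real^'n^'m) set" where
  "unit_cube_mat = {A. \<forall>i j. 0 \<le> A$i$j \<and> A$i$j < 1}"

definition supn :: "real^'k \<Rightarrow> real" where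
  "supn x = Max (range (\<lambda>i. \<bar>x$i\<bar>))"

definition isupn :: "int^'k \<Rightarrow> nat" where
  "isupn q = nat (Max (range (\<lambda>i. \<bar>q$i\<bar>)))"

definition ivec :: "int^'k \<Rightarrow> real^'k" where
  "ivec q = (\<chi> i. real_of_int (q$i))"

definition dist_Z :: "real^'k \<Rightarrow> real" where
  "dist_Z y = (INF p::int^'k. supn (y - ivec p))"

definition decreasing_fn :: "(nat \<Rightarrow> real) \<Rightarrow> bool" where
  "decreasing_fn \<psi> \<longleftrightarrow> (\<forall>a b. 1 \<le> a \<longrightarrow> a \<le> b \<longrightarrow> \<psi> b \<le> \<psi> a)"

definition W_set :: "(nat \<Rightarrow> real) \<Rightarrow> ((real^'n^'m) \<times> (real^'m)) set" where
  "W_set \<psi> = {(A, g). A \<in> unit_cube_mat \<and> g \<in> unit_cube_vec \<and>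
      infinite {q::int^'n. dist_Z (A *v ivec q - g) < \<psi> (isupn q)}}"

definition D_class :: "'n itself \<Rightarrow> 'm itself \<Rightarrow> (nat \<Rightarrow> real) set" where
  "D_class _ _ = {\<psi>. (\<forall>q. 0 \<le> \<psi> q) \<and> decreasing_fn \<psi> \<and>
      \<not> summable (\<lambda>q. real (Suc q) ^ (CARD('n) - 1) * \<psi> (Suc q) ^ CARD('m))}"

definition Omega :: "((real^'n^'m) \<times> (real^'m)) set" where
  "Omega = (\<Inter>\<psi> \<in> D_class TYPE('n) TYPE('m). W_set \<psi>)"

definition Omega_gamma :: "real^'m \<Rightarrow> (real^'n^'m) set" where
  "Omega_gamma g = {A. (A, g) \<in> Omega}"

definition D_gamma :: "real^'m \<Rightarrow> (nat \<Rightarrow> real) \<Rightarrow> (real^'n^'m) set" where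
  "D_gamma g \<psi> = {A. A \<in> unit_cube_mat \<and>
      (\<forall>\<^sub>F T in sequentially. \<exists>q::int^'n.
          dist_Z (A *v ivec q - g) ^ CARD('m) < \<psi> T \<and>
          1 \<le> isupn q ^ CARD('n) \<and> isupn q ^ CARD('n) \<le> T)}"

definition Sing_gamma :: "real^'m \<Rightarrow> (real^'n^'m) set" where
  "Sing_gamma g = (\<Inter>\<epsilon>\<in>{0::real<..}. D_gamma g (\<lambda>T. \<epsilon> * (1 / real T)))"

end

theory Submission
  imports Defs
begin
lemma pow_diff_le:
  fixes x y :: real
  assumes "0 \<le> y" "y \<le> x"
  shows "x ^ n - y ^ n \<le> real n * x ^ (n - 1) * (x - y)"
proof -
  have "(\<Sum>i<n. y ^ (n - Suc i) * x ^ i) \<le> (\<Sum>i<n. x ^ (n - 1))"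
  proof (rule sum_mono)
    fix i assume "i \<in> {..<n}"
    hence i: "i < n" by simp
    have "y ^ (n - Suc i) * x ^ i \<le> x ^ (n - Suc i) * x ^ i"
      using assms by (intro mult_right_mono power_mono) auto
    also have "\<dots> = x ^ (n - 1)" using i by (simp add: power_add[symmetric])
    finally show "y ^ (n - Suc i) * x ^ i \<le> x ^ (n - 1)" .
  qed
  hence "(x - y) * (\<Sum>i<n. y ^ (n - Suc i) * x ^ i) \<le> (x - y) * (real n * x ^ (n - 1))"
    using assms by (intro mult_left_mono) auto
  thus ?thesis by (simp add: power_diff_sumr2 algebra_simps)
qed

lemma block_sum:
  fixes a b n :: nat
  assumes "a \<le> b"
  shows "real b ^ n - real a ^ n \<le> real n * (\<Sum>r\<in>{a<..b}. real r ^ (n - 1))"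
  using assms
proof (induction b)
  case 0 thus ?case by simp
next
  case (Suc b)
  show ?case
  proof (cases "a = Suc b")
    case True thus ?thesis by simp
  next
    case False
    hence ab: "a \<le> b" using Suc.prems by simp
    have eq: "{a<..Suc b} = insert (Suc b) {a<..b}" using ab by auto
    have "real (Suc b) ^ n - real b ^ n \<le> real n * real (Suc b) ^ (n - 1) * (real (Suc b) - real b)"
      by (rule pow_diff_le) auto
    hence "real (Suc b) ^ n - real b ^ n \<le> real n * real (Suc b) ^ (n - 1)" by simp
    with Suc.IH[OF ab] show ?thesis
      by (simp add: eq distrib_left)
  qed
qed

lemma construct:
  fixes d :: "'q \<Rightarrow> real" and h :: "'q \<Rightarrow> nat" and n m :: nat and \<delta> :: real
  assumes n: "n > 0" and m: "m > 0" and dp: "\<delta> > 0" and d0: "\<And>q. 0 \<le> d q"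
    and S: "\<And>N. \<exists>s\<ge>N. s \<ge> 1 \<and> (\<forall>q. 1 \<le> h q \<and> h q \<le> s \<longrightarrow> \<delta> / real s ^ n \<le> d q ^ m)"
  shows "\<exists>\<psi>. (\<forall>r. 0 \<le> \<psi> r) \<and> (\<forall>a b. a \<le> b \<longrightarrow> \<psi> b \<le> \<psi> a) \<and>
     \<not> summable (\<lambda>q. real (Suc q) ^ (n - 1) * \<psi> (Suc q) ^ m) \<and>
     {q. d q < \<psi> (h q)} \<subseteq> {q. h q = 0}"
proof -
  define P where "P s \<longleftrightarrow> s \<ge> 1 \<and> (\<forall>q. 1 \<le> h q \<and> h q \<le> s \<longrightarrow> \<delta> / real s ^ n \<le> d q ^ m)" for s
  define pick where "pick x = (SOME s. s \<ge> x \<and> P s)" for x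
  have pick: "pick x \<ge> x \<and> P (pick x)" for x
    unfolding pick_def by (rule someI_ex) (use S[of x] in \<open>auto simp: P_def\<close>)
  define \<sigma> where "\<sigma> = rec_nat (pick 1) (\<lambda>_ x. pick (2 * x))"
  have \<sigma>0: "\<sigma> 0 = pick 1" and \<sigma>S: "\<sigma> (Suc k) = pick (2 * \<sigma> k)" for k
    by (simp_all add: \<sigma>_def)
  have P\<sigma>: "P (\<sigma> k)" for k by (cases k) (simp_all add: \<sigma>0 \<sigma>S pick)
  have \<sigma>1: "\<sigma> k \<ge> 1" for k using P\<sigma>[of k] by (simp add: P_def)
  have \<sigma>2: "\<sigma> (Suc k) \<ge> 2 * \<sigma> k" for k using pick \<sigma>S by simp
  have smono: "strict_mono \<sigma>"
    unfolding strict_mono_Suc_iff using \<sigma>1 \<sigma>2 by (metis less_le_trans lessI mult_2 nat_add_left_cancel_less add_gr_0 less_numeral_extra(1) less_le_not_le order.strict_trans1 trans_less_add1 add_less_cancel_left le_less_trans zero_less_one less_add_same_cancel1 not_less)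
  have \<sigma>ge: "\<sigma> k \<ge> k" for k using smono by (simp add: strict_mono_imp_increasing)
  define \<kappa> where "\<kappa> r = (LEAST k. r \<le> \<sigma> k)" for r
  have \<kappa>1: "r \<le> \<sigma> (\<kappa> r)" for r unfolding \<kappa>_def by (rule LeastI[of _ r]) (rule \<sigma>ge)
  have \<kappa>2: "r \<le> \<sigma> k \<Longrightarrow> \<kappa> r \<le> k" for r k unfolding \<kappa>_def by (rule Least_le)
  have \<kappa>mono: "a \<le> b \<Longrightarrow> \<kappa> a \<le> \<kappa> b" for a b using \<kappa>1[of b] \<kappa>2[of a "\<kappa> b"] by simp
  have \<kappa>blk: "\<sigma> k < r \<Longrightarrow> r \<le> \<sigma> (Suc k) \<Longrightarrow> \<kappa> r = Suc k" for r k
  proof -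
    assume a: "\<sigma> k < r" "r \<le> \<sigma> (Suc k)"
    have "\<kappa> r \<le> Suc k" using \<kappa>2 a by simp
    moreover have "\<not> \<kappa> r \<le> k"
    proof
      assume "\<kappa> r \<le> k"
      hence "\<sigma> (\<kappa> r) \<le> \<sigma> k" using smono by (simp add: strict_mono_less_eq)
      with \<kappa>1[of r] a show False by simp
    qed
    ultimately show ?thesis by simp
  qed
  define c where "c r = \<delta> / real (\<sigma> (\<kappa> r)) ^ n" for r
  have cpos: "c r > 0" for r using dp \<sigma>1[of "\<kappa> r"] by (simp add: c_def)
  define \<psi> where "\<psi> r = root m (c r)" for r
  have \<psi>m: "\<psi> r ^ m = c r" for r unfolding \<psi>_def using m cpos[of r] by (simp add: real_root_pow_pos2)
  have \<psi>0: "0 \<le> \<psi> r" for r unfolding \<psi>_def using cpos[of r] by (simp add: real_root_ge_zero)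
  have \<psi>dec: "a \<le> b \<longrightarrow> \<psi> b \<le> \<psi> a" for a b
  proof
    assume "a \<le> b"
    hence "\<sigma> (\<kappa> a) \<le> \<sigma> (\<kappa> b)" using \<kappa>mono smono by (simp add: strict_mono_less_eq)
    hence "c b \<le> c a" unfolding c_def using dp \<sigma>1[of "\<kappa> a"]
      by (intro divide_left_mono power_mono mult_pos_pos) auto
    thus "\<psi> b \<le> \<psi> a" unfolding \<psi>_def using m by (simp add: real_root_le_iff)
  qed
  have fin: "{q. d q < \<psi> (h q)} \<subseteq> {q. h q = 0}"
  proof (rule subsetI, rule ccontr)
    fix q assume q: "q \<in> {q. d q < \<psi> (h q)}" and nz: "q \<notin> {q. h q = 0}"
    have "d q ^ m < \<psi> (h q) ^ m" using q d0[of q] m by (intro power_strict_mono) auto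
    hence lt: "d q ^ m < c (h q)" by (simp add: \<psi>m)
    have "c (h q) \<le> d q ^ m" using P\<sigma>[of "\<kappa> (h q)"] nz \<kappa>1[of "h q"] unfolding P_def c_def by auto
    with lt show False by simp
  qed
  define g where "g r = real r ^ (n - 1) * \<psi> r ^ m" for r
  have g0: "0 \<le> g r" for r unfolding g_def using \<psi>0 by simp
  have blk: "\<delta> / (2 * real n) \<le> (\<Sum>r\<in>{\<sigma> k<..\<sigma> (Suc k)}. g r)" for k
  proof -
    let ?a = "\<sigma> k" and ?b = "\<sigma> (Suc k)"
    have ab: "2 * ?a \<le> ?b" by (rule \<sigma>2)
    have bpos: "real ?b ^ n > 0" using \<sigma>1[of "Suc k"] by simp
    have "(\<Sum>r\<in>{?a<..?b}. g r) = (\<Sum>r\<in>{?a<..?b}. (\<delta> / real ?b ^ n) * real r ^ (n - 1))"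
      by (rule sum.cong) (auto simp: g_def \<psi>m c_def \<kappa>blk)
    also have "\<dots> = (\<delta> / real ?b ^ n) * (\<Sum>r\<in>{?a<..?b}. real r ^ (n - 1))"
      by (simp add: sum_distrib_left)
    finally have eq: "(\<Sum>r\<in>{?a<..?b}. g r) = (\<delta> / real ?b ^ n) * (\<Sum>r\<in>{?a<..?b}. real r ^ (n - 1))" .
    have bs: "real ?b ^ n - real ?a ^ n \<le> real n * (\<Sum>r\<in>{?a<..?b}. real r ^ (n - 1))"
      using ab by (intro block_sum) simp
    have "2 * real ?a ^ n \<le> real ?b ^ n"
    proof -
      have "2 * real ?a ^ n \<le> 2 ^ n * real ?a ^ n"
        using n by (intro mult_right_mono) (auto simp: self_le_power)
      also have "\<dots> = (2 * real ?a) ^ n" by (simp add: power_mult_distrib)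
      also have "\<dots> \<le> real ?b ^ n" using ab by (intro power_mono) (auto simp flip: of_nat_mult)
      finally show ?thesis .
    qed
    hence "real ?b ^ n / 2 \<le> real n * (\<Sum>r\<in>{?a<..?b}. real r ^ (n - 1))" using bs by simp
    hence "real ?b ^ n / (2 * real n) \<le> (\<Sum>r\<in>{?a<..?b}. real r ^ (n - 1))"
      using n by (simp add: field_simps)
    hence "(\<delta> / real ?b ^ n) * (real ?b ^ n / (2 * real n)) \<le> (\<delta> / real ?b ^ n) * (\<Sum>r\<in>{?a<..?b}. real r ^ (n - 1))"
      using dp bpos by (intro mult_left_mono) auto
    moreover have "(\<delta> / real ?b ^ n) * (real ?b ^ n / (2 * real n)) = \<delta> / (2 * real n)"
      using bpos by (simp add: field_simps)
    ultimately show ?thesis using eq by linarith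
  qed
  have many: "real K * (\<delta> / (2 * real n)) \<le> (\<Sum>r\<in>{\<sigma> 0<..\<sigma> K}. g r)" for K
  proof (induction K)
    case 0 thus ?case by simp
  next
    case (Suc K)
    have le: "\<sigma> 0 \<le> \<sigma> K" "\<sigma> K \<le> \<sigma> (Suc K)" using smono by (auto simp: strict_mono_less_eq)
    have "{\<sigma> 0<..\<sigma> (Suc K)} = {\<sigma> 0<..\<sigma> K} \<union> {\<sigma> K<..\<sigma> (Suc K)}"
      using le by (simp add: ivl_disj_un_two)
    hence "(\<Sum>r\<in>{\<sigma> 0<..\<sigma> (Suc K)}. g r) = (\<Sum>r\<in>{\<sigma> 0<..\<sigma> K}. g r) + (\<Sum>r\<in>{\<sigma> K<..\<sigma> (Suc K)}. g r)"
      by (simp add: sum.union_disjoint)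
    with Suc.IH blk[of K] show ?case by (simp add: distrib_right add_divide_distrib)
  qed
  have nsum: "\<not> summable (\<lambda>q. g (Suc q))"
  proof
    assume sm: "summable (\<lambda>q. g (Suc q))"
    have bound: "real K * (\<delta> / (2 * real n)) \<le> suminf (\<lambda>q. g (Suc q))" for K
    proof -
      have "(\<Sum>r\<in>{\<sigma> 0<..\<sigma> K}. g r) \<le> (\<Sum>r\<in>Suc ` {..<\<sigma> K}. g r)"
      proof (rule sum_mono2)
        show "{\<sigma> 0<..\<sigma> K} \<subseteq> Suc ` {..<\<sigma> K}"
        proof
          fix x assume "x \<in> {\<sigma> 0<..\<sigma> K}"
          thus "x \<in> Suc ` {..<\<sigma> K}" by (intro image_eqI[where x="x - 1"]) auto
        qed
      qed (auto simp: g0)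
      also have "\<dots> = (\<Sum>q<\<sigma> K. g (Suc q))" by (simp add: sum.reindex)
      also have "\<dots> \<le> suminf (\<lambda>q. g (Suc q))" using sm g0 by (intro sum_le_suminf) auto
      finally show ?thesis using many[of K] by simp
    qed
    have cp: "\<delta> / (2 * real n) > 0" using dp n by simp
    obtain K :: nat where "real K > suminf (\<lambda>q. g (Suc q)) / (\<delta> / (2 * real n))"
      using reals_Archimedean2 by blast
    hence "real K * (\<delta> / (2 * real n)) > suminf (\<lambda>q. g (Suc q))" using cp pos_divide_less_eq by (metis mult.commute)
    with bound[of K] show False by simp
  qed
  show ?thesis
    by (rule exI[of _ \<psi>]) (use \<psi>0 \<psi>dec fin nsum in \<open>auto simp: g_def\<close>)
qed

lemma dist_Z_nonneg: "0 \<le> dist_Z (y :: real^'k)"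
  unfolding dist_Z_def
proof (rule cINF_greatest)
  fix p :: "int^'k"
  obtain i :: 'k where True by blast
  have "\<bar>(y - ivec p) $ i\<bar> \<le> supn (y - ivec p)"
    unfolding supn_def by (rule Max_ge) auto
  thus "0 \<le> supn (y - ivec p)" by linarith
qed simp

lemma isupn_zero: "finite {q :: int^'k. isupn q = 0}"
proof -
  have "{q :: int^'k. isupn q = 0} \<subseteq> {0}"
  proof
    fix q :: "int^'k" assume "q \<in> {q. isupn q = 0}"
    hence M: "Max (range (\<lambda>i. \<bar>q$i\<bar>)) \<le> 0" by (simp add: isupn_def)
    have "\<bar>q$i\<bar> \<le> Max (range (\<lambda>i. \<bar>q$i\<bar>))" for i by (rule Max_ge) auto
    with M have "q $ i = 0" for i by (metis abs_le_zero_iff order_trans)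
    thus "q \<in> {0}" by (simp add: vec_eq_iff)
  qed
  thus ?thesis by (rule finite_subset) simp
qed

theorem lemma3p1:
  fixes \<gamma> :: "real^'m"
  assumes "\<gamma> \<in> unit_cube_vec"
  shows "(Omega_gamma \<gamma> :: (real^'n^'m) set) \<subseteq> Sing_gamma \<gamma>"
proof
  fix A :: "real^'n^'m"
  assume AO: "A \<in> Omega_gamma \<gamma>"
  hence AW: "\<And>\<psi>. \<psi> \<in> D_class TYPE('n) TYPE('m) \<Longrightarrow> (A, \<gamma>) \<in> W_set \<psi>"
    by (auto simp: Omega_gamma_def Omega_def)
  let ?n = "CARD('n)" and ?m = "CARD('m)"
  have one: "(\<lambda>_. 1) \<in> D_class TYPE('n) TYPE('m)"
  proof -
    have "\<not> summable (\<lambda>q. real (Suc q) ^ (?n - 1) * 1 ^ ?m)"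
    proof
      assume "summable (\<lambda>q. real (Suc q) ^ (?n - 1) * 1 ^ ?m)"
      hence "(\<lambda>q. real (Suc q) ^ (?n - 1) * 1 ^ ?m) \<longlonglongrightarrow> 0" by (rule summable_LIMSEQ_zero)
      moreover have "1 \<le> real (Suc q) ^ (?n - 1) * 1 ^ ?m" for q by simp
      ultimately have "1 \<le> (0::real)"
        by (intro LIMSEQ_le_const[of _ 0 1]) auto
      thus False by simp
    qed
    thus ?thesis by (simp add: D_class_def decreasing_fn_def)
  qed
  have Acube: "A \<in> unit_cube_mat" using AW[OF one] by (simp add: W_set_def)
  show "A \<in> Sing_gamma \<gamma>"
    unfolding Sing_gamma_def
  proof (rule INT_I, rule ccontr)
    fix \<epsilon> :: real assume ep: "\<epsilon> \<in> {0<..}"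
    hence ep0: "\<epsilon> > 0" by simp
    assume "A \<notin> D_gamma \<gamma> (\<lambda>T. \<epsilon> * (1 / real T))"
    hence freq: "\<forall>N. \<exists>T\<ge>N. \<forall>q::int^'n. \<not> (dist_Z (A *v ivec q - \<gamma>) ^ ?m < \<epsilon> * (1 / real T) \<and>
          1 \<le> isupn q ^ ?n \<and> isupn q ^ ?n \<le> T)"
      using Acube by (simp add: D_gamma_def not_eventually frequently_sequentially)
    define d where "d q = dist_Z (A *v ivec q - \<gamma>)" for q :: "int^'n"
    define \<delta> where "\<delta> = \<epsilon> / 2 ^ ?n"
    have dp: "\<delta> > 0" using ep0 by (simp add: \<delta>_def)
    have d0: "\<And>q. 0 \<le> d q" unfolding d_def by (rule dist_Z_nonneg)
    have npos: "?n > 0" and mpos: "?m > 0" by simp_all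
    have S: "\<exists>s\<ge>N. s \<ge> 1 \<and> (\<forall>q. 1 \<le> isupn q \<and> isupn q \<le> s \<longrightarrow> \<delta> / real s ^ ?n \<le> d q ^ ?m)" for N
    proof -
      obtain T where T: "T \<ge> (N+1) ^ ?n" and bad: "\<forall>q::int^'n. \<not> (d q ^ ?m < \<epsilon> * (1 / real T) \<and>
          1 \<le> isupn q ^ ?n \<and> isupn q ^ ?n \<le> T)"
        using freq[rule_format, of "(N+1) ^ ?n"] unfolding d_def by blast
      define s where "s = (LEAST s. T < (s+1) ^ ?n)"
      have ex: "T < (T+1) ^ ?n"
      proof -
        have "T + 1 \<le> (T+1) ^ ?n" using npos by (simp add: self_le_power)
        thus ?thesis by simp
      qed
      have s1: "T < (s+1) ^ ?n" unfolding s_def by (rule LeastI[of _ T]) (rule ex)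
      have s2: "s ^ ?n \<le> T"
      proof (cases s)
        case 0 thus ?thesis using npos by (simp add: zero_power)
      next
        case (Suc s')
        have "\<not> T < (s'+1) ^ ?n"
        proof
          assume "T < (s'+1) ^ ?n"
          hence "s \<le> s'" unfolding s_def by (rule Least_le)
          thus False using Suc by simp
        qed
        thus ?thesis using Suc by simp
      qed
      have sN: "s \<ge> N + 1"
      proof -
        have "(N+1) ^ ?n < (s+1) ^ ?n" using T s1 by simp
        hence "N + 1 < s + 1" by (rule power_less_imp_less_base) simp
        thus ?thesis by simp
      qed
      have Tpos: "T \<ge> 1" using T npos by (metis le_add2 le_trans one_le_power Suc_eq_plus1 Suc_le_eq less_eq_Suc_le zero_less_Suc)
      have bnd: "\<delta> / real s ^ ?n \<le> \<epsilon> / real T"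
      proof -
        have "real T < real ((s+1) ^ ?n)" using s1 by linarith
        also have "\<dots> \<le> real ((2 * s) ^ ?n)" using sN by (intro of_nat_mono power_mono) auto
        finally have "real T < 2 ^ ?n * real s ^ ?n" by (simp add: power_mult_distrib)
        hence "\<epsilon> / (2 ^ ?n * real s ^ ?n) \<le> \<epsilon> / real T"
          using ep0 Tpos by (intro divide_left_mono) auto
        thus ?thesis by (simp add: \<delta>_def)
      qed
      show ?thesis
      proof (intro exI conjI allI impI)
        show "N \<le> s" "1 \<le> s" using sN by simp_all
        fix q :: "int^'n" assume q: "1 \<le> isupn q \<and> isupn q \<le> s"
        have "isupn q ^ ?n \<le> s ^ ?n" using q by (intro power_mono) auto
        hence "isupn q ^ ?n \<le> T" using s2 by (rule order_trans)
        moreover have "1 \<le> isupn q ^ ?n" using q by simp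
        ultimately have "\<not> d q ^ ?m < \<epsilon> * (1 / real T)" using bad by blast
        thus "\<delta> / real s ^ ?n \<le> d q ^ ?m" using bnd by simp
      qed
    qed
    obtain \<psi> where \<psi>0: "\<forall>r. 0 \<le> \<psi> r" and \<psi>dec: "\<forall>a b. a \<le> b \<longrightarrow> \<psi> b \<le> \<psi> a"
      and \<psi>ns: "\<not> summable (\<lambda>q. real (Suc q) ^ (?n - 1) * \<psi> (Suc q) ^ ?m)"
      and \<psi>fin: "{q. d q < \<psi> (isupn q)} \<subseteq> {q. isupn q = 0}"
      using construct[of ?n ?m \<delta> d isupn, OF npos mpos dp d0 S] by blast
    have "\<psi> \<in> D_class TYPE('n) TYPE('m)"
      using \<psi>0 \<psi>dec \<psi>ns by (simp add: D_class_def decreasing_fn_def)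
    hence "infinite {q::int^'n. d q < \<psi> (isupn q)}" using AW by (simp add: W_set_def d_def)
    moreover have "finite {q::int^'n. d q < \<psi> (isupn q)}"
      using \<psi>fin isupn_zero by (rule finite_subset)
    ultimately show False by contradiction
  qed
qed

end
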